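(* Let $f\in F$ be strongly positive and let $w=x_{i_m}\cdots x_{i_1}$ ($i_k\ge1$) be any expression for $f$ as a product of $x_1,x_2,\dots$. Consider rewriting $w$ by repeatedly applying operations that replace a subword $x_kx_n$ with $k<n-1$ by $x_{n-1}x_k$ (which is valid in $F$). Then any sequence of such operations has at most $\binom{c(f)}{2}$ steps, and when no operation is applicable the resulting word is the anti-normal form of $f$, i.e. the unique expression $x_{j_m}\cdots x_{j_1}$ of $f$ with $j_{k+1}\ge j_k-1$ for all $k$.
   Context: Thompson's group $F=\langle x_0,x_1,x_2,\dots\mid x_nx_k=x_kx_{n+1}\text{ for }k<n\rangle$. An element is strongly positive if it lies in the submonoid generated by $x_1,x_2,\dots$. Every strongly positive $f$ has a unique expression $x_{j_m}\cdots x_{j_1}$ ($j_k\ge1$) with $j_{k+1}\ge j_k-1$ for all $k$ (its anti-normal form). $c(f)$ denotes the number of letters in any expression of $f$ as a product of $x_1,x_2,\dots$ (this number is independent of the expression since all relations are length-preserving; it equals the number of carets in the reduced forest diagram of $f$). *)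

theory Defs
  imports Main
begin

text \<open>A letter is (i, True) for x_i and (i, False) for x_i^{-1}.  A word
  is read left to right, so the list [a, b, c] denotes the product a b c.\<close>

type_synonym fword = "(nat \<times> bool) list"

text \<open>Equality in F = < x_0, x_1, ... | x_n x_k = x_k x_{n+1} (k < n) >:
  the smallest congruence on words containing free cancellation and the
  defining relations.\<close>

inductive F_eq :: "fword \<Rightarrow> fword \<Rightarrow> bool" where
  refl: "F_eq u u"
| sym: "F_eq u v \<Longrightarrow> F_eq v u"
| trans: "F_eq u v \<Longrightarrow> F_eq v w \<Longrightarrow> F_eq u w"
| cancel1: "F_eq (a @ [(i, True), (i, False)] @ b) (a @ b)"
| cancel2: "F_eq (a @ [(i, False), (i, True)] @ b) (a @ b)"
| rel: "k < n \<Longrightarrow> F_eq (a @ [(n, True), (k, True)] @ b) (a @ [(k, True), (Suc n, True)] @ b)"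

text \<open>A positive word x_{i_m} ... x_{i_1} is represented by the list [i_m, ..., i_1].\<close>

definition pos_word :: "nat list \<Rightarrow> fword" where
  "pos_word w = map (\<lambda>i. (i, True)) w"

definition rw_step :: "nat list \<Rightarrow> nat list \<Rightarrow> bool" where
  "rw_step u v \<longleftrightarrow> (\<exists>a b k n. u = a @ [k, n] @ b \<and> k + 1 < n \<and> v = a @ [n - 1, k] @ b)"

definition anti_normal :: "nat list \<Rightarrow> bool" where
  "anti_normal v \<longleftrightarrow> (\<forall>j\<in>set v. 1 \<le> j) \<and>
     (\<forall>i. Suc i < length v \<longrightarrow> int (v ! (Suc i)) - 1 \<le> int (v ! i))"

end

theory Submission
  imports Defs
begin

type_synonym lw = "(nat \<times> nat) list"

definition cnt :: "nat \<Rightarrow> lw \<Rightarrow> nat" where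
  "cnt t c = length (filter (\<lambda>z. fst z < t) c)"

definition Good :: "nat \<times> nat \<Rightarrow> lw \<Rightarrow> bool" where
  "Good x L \<longleftrightarrow> (\<forall>j<length L. fst (L!j) < fst x \<longrightarrow>
      snd (L!j) + 1 \<le> snd x + cnt (fst (L!j)) (take j L))"

fun Inv :: "lw \<Rightarrow> bool" where
  "Inv [] = True"
| "Inv (x # xs) = (Good x xs \<and> Inv xs)"

fun ninv :: "lw \<Rightarrow> nat" where
  "ninv [] = 0"
| "ninv (x # xs) = cnt (fst x) xs + ninv xs"

definition lstep :: "lw \<Rightarrow> lw \<Rightarrow> bool" where
  "lstep L M \<longleftrightarrow> (\<exists>a b p q k n. L = a @ [(p,k),(q,n)] @ b \<and> k + 1 < n \<and>
      M = a @ [(q,n-1),(p,k)] @ b)"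

lemma cnt_append[simp]: "cnt t (a @ b) = cnt t a + cnt t b"
  by (simp add: cnt_def)
lemma cnt_Cons[simp]: "cnt t (x # b) = (if fst x < t then 1 else 0) + cnt t b"
  by (simp add: cnt_def)
lemma cnt_Nil[simp]: "cnt t [] = 0"
  by (simp add: cnt_def)

lemma Good_base_lt:
  assumes "Good (p,k) ((q,n) # b)" "k + 1 < n" "p \<noteq> q"
  shows "p < q"
proof (rule ccontr)
  assume "\<not> p < q"
  hence "q < p" using assms(3) by simp
  with assms(1) have "n + 1 \<le> k" unfolding Good_def by (auto simp: Good_def)
  with assms(2) show False by simp
qed

lemma Good_drop:
  assumes "Good (p,k) ((q,n) # b)" "p < q"
  shows "Good (p,k) b"
  unfolding Good_def
proof (intro allI impI)
  fix j assume j: "j < length b" and lt: "fst (b!j) < fst (p,k)"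
  from assms(1) have "snd (((q,n)#b)!Suc j) + 1 \<le> k + cnt (fst (((q,n)#b)!Suc j)) (take (Suc j) ((q,n)#b))"
    using j lt unfolding Good_def by (metis Suc_less_eq length_Cons nth_Cons_Suc fst_conv snd_conv)
  then show "snd (b!j) + 1 \<le> snd (p,k) + cnt (fst (b!j)) (take j b)"
    using lt assms(2) by simp
qed

lemma Good_new:
  assumes g1: "Good (p,k) ((q,n) # b)" and g2: "Good (q,n) b" and lt: "p < q"
    and kn: "k + 1 < n" and d: "p \<notin> fst ` set b"
  shows "Good (q,n-1) ((p,k) # b)"
  unfolding Good_def
proof (intro allI impI)
  fix j assume j: "j < length ((p,k)#b)" and l: "fst (((p,k)#b)!j) < fst (q,n-1)"
  show "snd (((p,k)#b)!j) + 1 \<le> snd (q,n-1) + cnt (fst (((p,k)#b)!j)) (take j ((p,k)#b))"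
  proof (cases j)
    case 0 then show ?thesis using kn by simp
  next
    case (Suc i)
    have i: "i < length b" using j Suc by simp
    have yq: "fst (b!i) < q" using l Suc by simp
    have h2: "snd (b!i) + 1 \<le> n + cnt (fst (b!i)) (take i b)"
      using g2 i yq unfolding Good_def by auto
    have ne: "fst (b!i) \<noteq> p" using d i by (metis nth_mem image_eqI)
    show ?thesis
    proof (cases "p < fst (b!i)")
      case True then show ?thesis using h2 Suc kn by simp
    next
      case False
      hence yp: "fst (b!i) < p" using ne by simp
      have "snd (((q,n)#b)!Suc i) + 1 \<le> k + cnt (fst (((q,n)#b)!Suc i)) (take (Suc i) ((q,n)#b))"
        using g1[unfolded Good_def, rule_format, of "Suc i"] i yp by simp
      then show ?thesis using Suc yp lt kn by simp
    qed
  qed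
qed

lemma Good_cross:
  assumes g: "Good x (a @ [(p,k),(q,n)] @ b)" and lt: "p < q" and kn: "k + 1 < n"
  shows "Good x (a @ [(q,n-1),(p,k)] @ b)"
  unfolding Good_def
proof (intro allI impI)
  let ?L = "a @ [(p,k),(q,n)] @ b"
  let ?M = "a @ [(q,n-1),(p,k)] @ b"
  fix j assume j: "j < length ?M" and l: "fst (?M!j) < fst x"
  have G: "\<And>j. j < length ?L \<Longrightarrow> fst (?L!j) < fst x \<Longrightarrow>
      snd (?L!j) + 1 \<le> snd x + cnt (fst (?L!j)) (take j ?L)"
    using g unfolding Good_def by blast
  consider (A) "j < length a" | (B) "j = length a" | (C) "j = Suc (length a)"
    | (D) "Suc (Suc (length a)) \<le> j" by linarith
  then show "snd (?M!j) + 1 \<le> snd x + cnt (fst (?M!j)) (take j ?M)"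
  proof cases
    case A
    then show ?thesis using G[of j] l by (simp add: nth_append)
  next
    case B
    then show ?thesis using G[of "Suc (length a)"] l lt kn by (simp add: nth_append)
  next
    case C
    then show ?thesis using G[of "length a"] l lt by (simp add: nth_append)
  next
    case D
    then obtain i where i: "j = Suc (Suc (length a)) + i" by (metis le_add_diff_inverse)
    then show ?thesis using G[of j] l j by (simp add: nth_append)
  qed
qed

lemma Inv_step:
  assumes "Inv (a @ [(p,k),(q,n)] @ b)" "p < q" "k + 1 < n" "distinct (map fst (a @ [(p,k),(q,n)] @ b))"
  shows "Inv (a @ [(q,n-1),(p,k)] @ b)"
  using assms
proof (induction a)
  case Nil
  then have g1: "Good (p,k) ((q,n) # b)" and g2: "Good (q,n) b" and ib: "Inv b"
    and d: "p \<notin> fst ` set b" by auto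
  show ?case using Good_new[OF g1 g2 Nil(2,3) d] Good_drop[OF g1 Nil(2)] ib by simp
next
  case (Cons x a)
  then show ?case using Good_cross by simp
qed

lemma ninv_step:
  assumes "p < q"
  shows "ninv (a @ [(q,n'),(p,k)] @ b) = Suc (ninv (a @ [(p,k),(q,n)] @ b))"
  using assms by (induction a) auto

lemma ninv_bound: "ninv L \<le> length L choose 2"
proof (induction L)
  case Nil then show ?case by simp
next
  case (Cons x L)
  have "cnt (fst x) L \<le> length L" unfolding cnt_def by simp
  moreover have "Suc (length L) choose 2 = length L + (length L choose 2)"
    by (simp add: numeral_2_eq_2)
  ultimately show ?case using Cons by simp
qed

lemma Inv_init: "Inv (zip [i..<i + length w] w)"
proof (induction w arbitrary: i)
  case Nil then show ?case by simp
next
  case (Cons c w)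
  have e: "[i..<i + length (c # w)] = i # [Suc i..<Suc i + length w]"
    by (simp add: upt_rec)
  have "Good (i, c) (zip [Suc i..<Suc i + length w] w)"
    unfolding Good_def by (simp del: upt_Suc add: nth_zip)
  then show ?case using Cons[of "Suc i"] e by simp
qed

lemma lift:
  "(rw_step ^^ s) w v \<Longrightarrow> map snd L = w \<Longrightarrow> Inv L \<Longrightarrow> distinct (map fst L) \<Longrightarrow>
   \<exists>M. length M = length L \<and> map snd M = v \<and> Inv M \<and> distinct (map fst M) \<and> ninv M = ninv L + s"
proof (induction s arbitrary: v)
  case 0 then show ?case by auto
next
  case (Suc s)
  from Suc.prems(1) obtain u where su: "(rw_step ^^ s) w u" and st: "rw_step u v" by auto
  from Suc.IH[OF su Suc.prems(2-4)] obtain M where M: "map snd M = u" "Inv M"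
    "distinct (map fst M)" "ninv M = ninv L + s" and HL: "length M = length L" by blast
  from st obtain a b k n where u: "u = a @ [k, n] @ b" and kn: "k + 1 < n"
    and v: "v = a @ [n - 1, k] @ b" unfolding rw_step_def by blast
  from M(1) u obtain a' r where "M = a' @ r" "map snd a' = a" "map snd r = [k, n] @ b"
    by (auto simp: map_eq_append_conv)
  moreover then obtain P Q b' where "r = P # Q # b'" "snd P = k" "snd Q = n" "map snd b' = b"
    by (auto simp: map_eq_Cons_conv)
  ultimately obtain p q where Mf: "M = a' @ [(p,k),(q,n)] @ b'" "map snd a' = a" "map snd b' = b"
    by (metis append_Cons append_Nil prod.collapse)
  have pq: "p < q" using M(2,3) Mf(1) kn
  proof (induction a' arbitrary: M)
    case Nil then show ?case using Good_base_lt by auto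
  next
    case (Cons x a'') then show ?case by auto
  qed
  let ?N = "a' @ [(q,n-1),(p,k)] @ b'"
  have "length ?N = length L" using Mf HL by simp
  moreover have "map snd ?N = v" using Mf v by simp
  moreover have "Inv ?N" using Inv_step[of a' p k q n b'] M Mf pq kn by simp
  moreover have "distinct (map fst ?N)" using M(3) Mf by auto
  moreover have "ninv ?N = ninv L + Suc s" using ninv_step[OF pq, of a' "n-1" k b' n] M(4) Mf by simp
  ultimately show ?case by blast
qed

lemma step_F_eq: "rw_step u v \<Longrightarrow> F_eq (pos_word v) (pos_word u)"
proof -
  assume "rw_step u v"
  then obtain a b k n where u: "u = a @ [k, n] @ b" and kn: "k + 1 < n"
    and v: "v = a @ [n - 1, k] @ b" unfolding rw_step_def by blast
  have "F_eq (pos_word a @ [(n-1, True), (k, True)] @ pos_word b)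
              (pos_word a @ [(k, True), (Suc (n-1), True)] @ pos_word b)"
    using kn by (intro F_eq.rel) simp
  moreover have "Suc (n-1) = n" using kn by simp
  ultimately show ?thesis using u v by (simp add: pos_word_def)
qed

lemma step_pos: "rw_step u v \<Longrightarrow> \<forall>i\<in>set u. 1 \<le> i \<Longrightarrow> \<forall>i\<in>set v. 1 \<le> i"
  unfolding rw_step_def by auto

lemma terminal_anti:
  assumes "\<not> (\<exists>v'. rw_step v v')" "Suc i < length v"
  shows "int (v ! (Suc i)) - 1 \<le> int (v ! i)"
proof (rule ccontr)
  assume "\<not> ?thesis"
  hence lt: "v ! i + 1 < v ! Suc i" by simp
  have "v = take i v @ [v ! i, v ! Suc i] @ drop (Suc (Suc i)) v"
    using assms(2) by (metis Cons_nth_drop_Suc Suc_lessD append_Cons append_Nil append_take_drop_id)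
  hence "rw_step v (take i v @ [v ! Suc i - 1, v ! i] @ drop (Suc (Suc i)) v)"
    unfolding rw_step_def using lt by blast
  with assms(1) show False by blast
qed

theorem theorem4p1p10:
  fixes w :: "nat list"
  assumes "\<forall>i\<in>set w. 1 \<le> i"
  shows "(\<forall>s v. (rw_step ^^ s) w v \<longrightarrow> s \<le> length w choose 2)
       \<and> (\<forall>v. rw_step\<^sup>*\<^sup>* w v \<and> \<not> (\<exists>v'. rw_step v v')
              \<longrightarrow> anti_normal v \<and> F_eq (pos_word v) (pos_word w))"
proof (intro conjI allI impI)
  fix s v assume sv: "(rw_step ^^ s) w v"
  let ?L = "zip [0..<length w] w"
  have "map snd ?L = w" by simp
  moreover have "Inv ?L" using Inv_init[of 0 w] by simp
  moreover have "distinct (map fst ?L)" by simp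
  ultimately obtain M where "length M = length ?L" "ninv M = ninv ?L + s"
    using lift[OF sv] by blast
  moreover have "ninv ?L = 0"
  proof -
    have "ninv ?L \<le> length ?L choose 2" by (rule ninv_bound)
    have "\<And>i. ninv (zip [i..<i + length w] w) = 0"
    proof (induction w)
      case Nil then show ?case by simp
    next
      case (Cons c w)
      fix i
      have e: "[i..<i + length (c # w)] = i # [Suc i..<Suc i + length w]"
        by (simp add: upt_rec)
      have "cnt i (zip [Suc i..<Suc i + length w] w) = 0"
        unfolding cnt_def by (force simp del: upt_Suc simp: filter_empty_conv dest: set_zip_leftD)
      then show "ninv (zip [i..<i + length (c # w)] (c # w)) = 0" using Cons[of "Suc i"] e by simp
    qed
    from this[of 0] show ?thesis by simp
  qed
  ultimately show "s \<le> length w choose 2" using ninv_bound[of M] by simp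
next
  fix v assume h: "rw_step\<^sup>*\<^sup>* w v \<and> \<not> (\<exists>v'. rw_step v v')"
  have "(\<forall>i\<in>set v. 1 \<le> i) \<and> F_eq (pos_word v) (pos_word w)"
    using conjunct1[OF h]
  proof (induction rule: rtranclp_induct)
    case base then show ?case using assms by (simp add: F_eq.refl)
  next
    case (step u v)
    then show ?case using step_pos[OF step(2)] step_F_eq[OF step(2)] F_eq.trans by blast
  qed
  then show "F_eq (pos_word v) (pos_word w)" and "anti_normal v"
    unfolding anti_normal_def using terminal_anti conjunct2[OF h] by auto
qed

end
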